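(* For $\phi\in[-\pi,\pi]$ and $n\in\mathbb{N}$ define $$f_n(z)=\sum_{k=1}^{n}\frac{z^ke^{i(n+1-k)\phi}}{n+1-k}=\frac{ze^{in\phi}}{n}+\frac{z^2e^{i(n-1)\phi}}{n-1}+\dots+\frac{z^{n-1}e^{2i\phi}}{2}+z^ne^{i\phi}.$$ There is an absolute constant $C_0>0$ such that $\|f_n\|_{\mathcal{B}}\ge\frac{\log n}{C_0}$ for all $n\in\mathbb{N}$ and all $\phi$.
   Context: The Bloch space $\mathcal{B}$ consists of holomorphic $f$ on $\mathbb{D}$ with $\|f\|_{\mathcal{B}}=|f(0)|+\sup_{z\in\mathbb{D}}(1-|z|^2)|f'(z)|<\infty$. *)

theory Defs
  imports "HOL-Analysis.Analysis"
begin

text \<open>Bloch norm of a function holomorphic on the unit disc: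
  norm (f 0) + sup over the disc of (1 - |z|^2) |f'(z)|.
  (Used here only for polynomials, for which the supremum is finite.)\<close>
definition bloch_norm :: "(complex \<Rightarrow> complex) \<Rightarrow> real" where
  "bloch_norm f = norm (f 0) + (SUP z\<in>ball 0 1. (1 - (cmod z)\<^sup>2) * cmod (deriv f z))"

definition fn_poly :: "real \<Rightarrow> nat \<Rightarrow> complex \<Rightarrow> complex" where
  "fn_poly \<phi> n z = (\<Sum>k=1..n. z ^ k * exp (\<i> * of_real (real (n + 1 - k) * \<phi>)) / of_nat (n + 1 - k))"

end

theory Submission
  imports Defs "HOL-Analysis.Harmonic_Numbers"
begin

definition Dn :: "real \<Rightarrow> nat \<Rightarrow> complex \<Rightarrow> complex" where
  "Dn \<phi> n z = (\<Sum>k=1..n. of_nat k * z ^ (k - 1) * exp (\<i> * of_real (real (n + 1 - k) * \<phi>)) / of_nat (n + 1 - k))"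

lemma deriv_fn: "deriv (fn_poly \<phi> n) z = Dn \<phi> n z"
proof -
  have "(fn_poly \<phi> n has_field_derivative Dn \<phi> n z) (at z)"
    unfolding fn_poly_def[abs_def] Dn_def
  proof (rule DERIV_sum)
    fix k assume "k \<in> {1..n}"
    show "((\<lambda>z. z ^ k * exp (\<i> * of_real (real (n + 1 - k) * \<phi>)) / of_nat (n + 1 - k)) has_field_derivative
       of_nat k * z ^ (k - 1) * exp (\<i> * of_real (real (n + 1 - k) * \<phi>)) / of_nat (n + 1 - k)) (at z)"
      by (intro DERIV_cdivide DERIV_cmult_right DERIV_power[OF DERIV_ident, THEN DERIV_cong]) simp
  qed
  thus ?thesis by (rule DERIV_imp_deriv)
qed

lemma Dn_bound: assumes "cmod z < 1" shows "cmod (Dn \<phi> n z) \<le> (\<Sum>k=1..n. real k)"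
proof -
  have "cmod (Dn \<phi> n z) \<le> (\<Sum>k=1..n. cmod (of_nat k * z ^ (k - 1) * exp (\<i> * of_real (real (n + 1 - k) * \<phi>)) / of_nat (n + 1 - k)))"
    unfolding Dn_def by (rule norm_sum)
  also have "\<dots> \<le> (\<Sum>k=1..n. real k)"
  proof (rule sum_mono)
    fix k assume k: "k \<in> {1..n}"
    have "cmod (exp (\<i> * of_real (real (n + 1 - k) * \<phi>))) = 1" by (simp add: norm_exp_i_times)
    moreover have "cmod z ^ (k-1) \<le> 1" using assms by (simp add: power_le_one)
    moreover have "real (n+1-k) \<ge> 1" using k by auto
    ultimately have "real k * cmod z ^ (k-1) / real (n+1-k) \<le> real k * 1 / 1"
      by (intro frac_le mult_left_mono) auto
    thus "cmod (of_nat k * z ^ (k - 1) * exp (\<i> * of_real (real (n + 1 - k) * \<phi>)) / of_nat (n + 1 - k)) \<le> real k"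
      by (simp add: norm_mult norm_divide norm_power \<open>cmod (exp _) = 1\<close>)
  qed
  finally show ?thesis .
qed

lemma Dn_at: assumes "r \<ge> 0"
  shows "Dn \<phi> n (of_real r * exp (\<i> * of_real \<phi>)) = exp (\<i> * of_real (real n * \<phi>)) * of_real (\<Sum>k=1..n. real k * r^(k-1) / real (n+1-k))"
proof -
  have "Dn \<phi> n (of_real r * exp (\<i> * of_real \<phi>)) = (\<Sum>k=1..n. exp (\<i> * of_real (real n * \<phi>)) * of_real (real k * r^(k-1) / real (n+1-k)))"
    unfolding Dn_def
  proof (rule sum.cong[OF refl])
    fix k assume k: "k \<in> {1..n}"
    have "exp (\<i> * of_real \<phi>) ^ (k-1) * exp (\<i> * of_real (real (n + 1 - k) * \<phi>)) = exp (of_nat (k-1) * (\<i> * of_real \<phi>) + \<i> * of_real (real (n + 1 - k) * \<phi>))"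
      by (simp add: exp_add exp_of_nat_mult)
    also have "of_nat (k-1) * (\<i> * of_real \<phi>) + \<i> * of_real (real (n + 1 - k) * \<phi>) = \<i> * of_real (real n * \<phi>)"
      using k by (simp add: of_nat_diff algebra_simps)
    finally have e: "exp (\<i> * of_real \<phi>) ^ (k-1) * exp (\<i> * of_real (real (n + 1 - k) * \<phi>)) = exp (\<i> * of_real (real n * \<phi>))" .
    show "of_nat k * (of_real r * exp (\<i> * of_real \<phi>)) ^ (k - 1) * exp (\<i> * of_real (real (n + 1 - k) * \<phi>)) / of_nat (n + 1 - k) = exp (\<i> * of_real (real n * \<phi>)) * of_real (real k * r^(k-1) / real (n+1-k))"
    proof -
      have "of_nat k * (of_real r * exp (\<i> * of_real \<phi>)) ^ (k - 1) * exp (\<i> * of_real (real (n + 1 - k) * \<phi>)) / of_nat (n + 1 - k)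
        = (of_nat k * of_real r ^ (k-1) / of_nat (n+1-k)) * (exp (\<i> * of_real \<phi>) ^ (k-1) * exp (\<i> * of_real (real (n + 1 - k) * \<phi>)))"
        by (simp only: power_mult_distrib) (simp add: field_simps)
      also have "\<dots> = exp (\<i> * of_real (real n * \<phi>)) * of_real (real k * r^(k-1) / real (n+1-k))"
        unfolding e by simp
      finally show ?thesis .
    qed
  qed
  also have "\<dots> = exp (\<i> * of_real (real n * \<phi>)) * of_real (\<Sum>k=1..n. real k * r^(k-1) / real (n+1-k))"
    by (simp add: sum_distrib_left)
  finally show ?thesis .
qed

lemma T_eq: "(\<Sum>k=1..n. real k / real (n+1-k)) = real (n+1) * harm n - real n"
proof -
  have h: "harm n = (\<Sum>k=1..n. 1 / real (n+1-k))"
    unfolding harm_def using sum.atLeastAtMost_rev[of "\<lambda>k. inverse (real k)" 1 n]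
    by (simp add: inverse_eq_divide add.commute)
  have "(\<Sum>k=1..n. real k / real (n+1-k)) = (\<Sum>k=1..n. real (n+1) * (1 / real (n+1-k)) - 1)"
    by (rule sum.cong[OF refl]) (auto simp: of_nat_diff field_simps)
  also have "\<dots> = real (n+1) * harm n - real n"
    by (simp only: sum_subtractf sum_distrib_left[symmetric] h) simp
  finally show ?thesis .
qed

lemma rpow_bound: assumes "n \<ge> 2" shows "(1 - 1 / real n) ^ n \<ge> exp (-2)"
proof -
  have x: "0 \<le> 1 / real n" "1 / real n \<le> 1/2" using assms by (auto simp: field_simps)
  have pos: "1 - 1 / real n > 0" using assms by (auto simp: field_simps)
  have "ln ((1 - 1 / real n) ^ n) = real n * ln (1 - 1 / real n)"
    using pos by (simp add: ln_realpow)
  also have "\<dots> \<ge> real n * (- (1 / real n) - 2 * (1 / real n)\<^sup>2)"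
    using ln_one_minus_pos_lower_bound[OF x] by (intro mult_left_mono) auto
  also have "real n * (- (1 / real n) - 2 * (1 / real n)\<^sup>2) = -1 - 2 / real n"
    using assms by (simp add: power2_eq_square field_simps)
  finally have "ln ((1 - 1 / real n) ^ n) \<ge> -1 - 2 / real n" .
  moreover have "-1 - 2 / real n \<ge> -2" using assms by (simp add: field_simps)
  ultimately have "ln ((1 - 1 / real n) ^ n) \<ge> -2" by linarith
  hence "exp (ln ((1 - 1 / real n) ^ n)) \<ge> exp (-2)" by simp
  thus ?thesis using pos by simp
qed

lemma V_bound: assumes "n \<ge> 2"
  shows "(1 - (1 - 1 / real n)\<^sup>2) * (\<Sum>k=1..n. real k * (1 - 1 / real n)^(k-1) / real (n+1-k)) \<ge> ln (real n) / (4 * exp 2)"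
proof -
  define r where "r = 1 - 1 / real n"
  have r: "0 \<le> r" "r \<le> 1" using assms by (auto simp: r_def field_simps)
  have S_ge: "(\<Sum>k=1..n. real k * r^(k-1) / real (n+1-k)) \<ge> r^n * (\<Sum>k=1..n. real k / real (n+1-k))"
    unfolding sum_distrib_left
  proof (rule sum_mono)
    fix k assume k: "k \<in> {1..n}"
    have "r^n \<le> r^(k-1)" using r k by (intro power_decreasing) auto
    hence "real k * r^n \<le> real k * r^(k-1)" by (intro mult_left_mono) auto
    hence "real k * r^n / real (n+1-k) \<le> real k * r^(k-1) / real (n+1-k)" by (intro divide_right_mono) auto
    thus "r^n * (real k / real (n+1-k)) \<le> real k * r^(k-1) / real (n+1-k)"
      by (simp add: ac_simps)
  qed
  have S0: "(\<Sum>k=1..n. real k * r^(k-1) / real (n+1-k)) \<ge> 0" using r by (intro sum_nonneg) auto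
  have "harm 2 \<le> (harm n :: real)" using assms by (rule harm_mono)
  hence H2: "harm n \<ge> (3/2::real)" by (simp add: harm_expand)
  have Tn: "(\<Sum>k=1..n. real k / real (n+1-k)) \<ge> real n * (harm n - 1)"
    unfolding T_eq using H2 by (simp add: algebra_simps)
  have "1 - r\<^sup>2 \<ge> 1 / real n" using r assms by (simp add: r_def power2_eq_square field_simps)
  hence "(1 - r\<^sup>2) * (\<Sum>k=1..n. real k * r^(k-1) / real (n+1-k)) \<ge> 1 / real n * (r^n * (real n * (harm n - 1)))"
  proof -
    have rn: "r^n \<ge> 0" using r by simp
    have "r^n * (real n * (harm n - 1)) \<le> r^n * (\<Sum>k=1..n. real k / real (n+1-k))"
      using Tn rn by (rule mult_left_mono)
    hence X: "r^n * (real n * (harm n - 1)) \<le> (\<Sum>k=1..n. real k * r^(k-1) / real (n+1-k))"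
      using S_ge by linarith
    have X0: "0 \<le> r^n * (real n * (harm n - 1))" using rn H2 by simp
    have r2: "0 \<le> 1 - r\<^sup>2" using power_le_one[OF r, of 2] by simp
    show ?thesis using mult_mono[OF \<open>1 - r\<^sup>2 \<ge> 1 / real n\<close> X r2 X0] .
  qed
  moreover have "1 / real n * (r^n * (real n * (harm n - 1))) = r^n * (harm n - 1)" using assms by simp
  moreover have "r^n * (harm n - 1) \<ge> exp (-2) * (harm n / 4)"
  proof -
    have a: "exp (-2) \<le> r^n" using rpow_bound[OF assms] unfolding r_def .
    have b: "harm n / 4 \<le> (harm n - 1 :: real)" using H2 by simp
    have c: "0 \<le> r^n" using r by simp
    have d: "0 \<le> (harm n / 4 :: real)" using H2 by simp
    show ?thesis using mult_mono[OF a b c d] .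
  qed
  moreover have "harm n \<ge> ln (real n)"
  proof -
    have "ln (real n) \<le> ln (real n + 1)" using assms by simp
    thus ?thesis using ln_le_harm[of n] by linarith
  qed
  hence "exp (-2) * (harm n / 4) \<ge> exp (-2) * (ln (real n) / 4)" by (intro mult_left_mono) auto
  moreover have "exp (-2) * (ln (real n) / 4) = ln (real n) / (4 * exp 2)" by (simp add: exp_minus field_simps)
  ultimately show ?thesis unfolding r_def by linarith
qed

lemma bloch_ge:
  assumes "n \<ge> 1" "0 \<le> r" "r < 1"
  shows "bloch_norm (fn_poly \<phi> n) \<ge> (1 - r\<^sup>2) * (\<Sum>k=1..n. real k * r^(k-1) / real (n+1-k))"
proof -
  define z where "z = of_real r * exp (\<i> * of_real \<phi>)"
  define S where "S = (\<Sum>k=1..n. real k * r^(k-1) / real (n+1-k))"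
  have S0: "S \<ge> 0" unfolding S_def using assms by (intro sum_nonneg) auto
  have nz: "cmod z = r" using assms by (simp add: z_def norm_mult)
  have zb: "z \<in> ball 0 1" using nz assms by simp
  have "cmod (deriv (fn_poly \<phi> n) z) = S"
    unfolding deriv_fn z_def Dn_at[OF assms(2)] S_def[symmetric] using S0
    by (simp add: norm_mult)
  hence val: "(1 - (cmod z)\<^sup>2) * cmod (deriv (fn_poly \<phi> n) z) = (1 - r\<^sup>2) * S" using nz by simp
  have bdd: "bdd_above ((\<lambda>z. (1 - (cmod z)\<^sup>2) * cmod (deriv (fn_poly \<phi> n) z)) ` ball 0 1)"
  proof (rule bdd_aboveI2)
    fix w :: complex assume "w \<in> ball 0 1"
    hence w: "cmod w < 1" by simp
    have "(1 - (cmod w)\<^sup>2) * cmod (deriv (fn_poly \<phi> n) w) \<le> 1 * (\<Sum>k=1..n. real k)"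
      unfolding deriv_fn using Dn_bound[OF w] w
      by (intro mult_mono) (auto simp: power_le_one)
    thus "(1 - (cmod w)\<^sup>2) * cmod (deriv (fn_poly \<phi> n) w) \<le> (\<Sum>k=1..n. real k)" by simp
  qed
  have "(1 - r\<^sup>2) * S \<le> (SUP z\<in>ball 0 1. (1 - (cmod z)\<^sup>2) * cmod (deriv (fn_poly \<phi> n) z))"
    unfolding val[symmetric] by (rule cSUP_upper[OF zb bdd])
  thus ?thesis unfolding bloch_norm_def S_def by (smt (verit) norm_ge_zero)
qed

theorem mainTheorem8:
  shows "\<exists>C0::real. C0 > 0 \<and> (\<forall>n::nat. n \<ge> 1 \<longrightarrow> (\<forall>\<phi>::real. \<phi> \<in> {-pi..pi} \<longrightarrow>
           bloch_norm (fn_poly \<phi> n) \<ge> ln (real n) / C0))"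
proof (intro exI[of _ "4 * exp 2"] conjI allI impI)
  show "(0::real) < 4 * exp 2" by simp
  fix n :: nat and \<phi> :: real assume n: "n \<ge> 1"
  show "bloch_norm (fn_poly \<phi> n) \<ge> ln (real n) / (4 * exp 2)"
  proof (cases "n = 1")
    case True
    have "bloch_norm (fn_poly \<phi> n) \<ge> (1 - 0\<^sup>2) * (\<Sum>k=1..n. real k * 0^(k-1) / real (n+1-k))"
      by (rule bloch_ge[OF n]) auto
    moreover have "(1 - (0::real)\<^sup>2) * (\<Sum>k=1..n. real k * 0^(k-1) / real (n+1-k)) \<ge> 0"
      by (intro mult_nonneg_nonneg sum_nonneg) auto
    ultimately show ?thesis using True by simp
  next
    case False
    hence n2: "n \<ge> 2" using n by simp
    have "bloch_norm (fn_poly \<phi> n) \<ge> (1 - (1 - 1 / real n)\<^sup>2) * (\<Sum>k=1..n. real k * (1 - 1 / real n)^(k-1) / real (n+1-k))"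
      using n2 by (intro bloch_ge[OF n]) (auto simp: field_simps)
    with V_bound[OF n2] show ?thesis by linarith
  qed
qed

end
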